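(* Let $k$ be a non-archimedean local field of residue characteristic $2$ and let $B(x)=\sum_{i=1}^n a_i x_i^2$ be an anisotropic diagonal quadratic form on $k^n$ with $0\le\operatorname{ord} a_i\le 1$ for all $i$. Let $z=q^{-\beta}$, $w=zq^{-1}$, $u=z^2q^{-n}$, and let $T\ge0$ be an integer. Then \[ X^B(\beta;\varpi^{2T}) = \sum_{0\le\ell<2T+e+1} z^\ell X^B_\ell(\varpi^{2T}) + \frac{z^{2T+e+1}}{1-w}\,X^B_{2T+e+1}(\varpi^{2T}), \] \[ X^B(\beta;0) = \sum_{0\le\ell<e} z^\ell X^B_\ell(0) + \frac{z^e}{1-u}\,X^B_e(0) + \frac{z^{e+1}}{1-u}\,X^B_{e+1}(0). \]
   Context: $k$ has ring of integers $\mathfrak o$, uniformizer $\varpi$, residue field of cardinality $q$, absolute value normalized by $|\varpi|=q^{-1}$, normalized valuation $\operatorname{ord}$, and $e=\operatorname{ord}(2)$ is the ramification index. On $\mathfrak o^n$ use the additive Haar measure of total mass $1$. For $\rho\in\mathfrak o$ and integer $\ell\ge0$ set $X_\ell^B(\rho)=\operatorname{meas}\{x\in\mathfrak o^n: B(x)-\rho\in 2\varpi^\ell\mathfrak o\}$ and $X^B(\beta;\rho)=\sum_{\ell\ge0} z^\ell X^B_\ell(\rho)$ with $z=q^{-\beta}$ (a power series in $z$, convergent for $\operatorname{Re}\beta>0$). *)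

theory Defs
  imports "HOL-Analysis.Analysis"
begin

text \<open>A normalized discrete valuation on a field (values on 0 are irrelevant junk).\<close>
definition discrete_valuation :: "('a::field \<Rightarrow> int) \<Rightarrow> bool" where
  "discrete_valuation v \<longleftrightarrow>
     (\<forall>x y. x \<noteq> 0 \<longrightarrow> y \<noteq> 0 \<longrightarrow> v (x * y) = v x + v y) \<and>
     (\<forall>x y. x \<noteq> 0 \<longrightarrow> y \<noteq> 0 \<longrightarrow> x + y \<noteq> 0 \<longrightarrow> min (v x) (v y) \<le> v (x + y)) \<and>
     (\<forall>m. \<exists>x. x \<noteq> 0 \<and> v x = m)"

definition val_ideal :: "('a::field \<Rightarrow> int) \<Rightarrow> int \<Rightarrow> 'a set" where
  "val_ideal v m = {x. x = 0 \<or> m \<le> v x}"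

definition val_ring :: "('a::field \<Rightarrow> int) \<Rightarrow> 'a set" where
  "val_ring v = val_ideal v 0"

definition residue_rel :: "('a::field \<Rightarrow> int) \<Rightarrow> ('a \<times> 'a) set" where
  "residue_rel v = {(x, y). x \<in> val_ring v \<and> y \<in> val_ring v \<and> x - y \<in> val_ideal v 1}"

definition residue_field :: "('a::field \<Rightarrow> int) \<Rightarrow> 'a set set" where
  "residue_field v = val_ring v // residue_rel v"

definition val_complete :: "('a::field \<Rightarrow> int) \<Rightarrow> bool" where
  "val_complete v \<longleftrightarrow>
     (\<forall>s::nat \<Rightarrow> 'a. (\<forall>m. \<exists>N. \<forall>i\<ge>N. \<forall>j\<ge>N. s i - s j \<in> val_ideal v m) \<longrightarrow>
        (\<exists>L. \<forall>m. \<exists>N. \<forall>i\<ge>N. s i - L \<in> val_ideal v m))"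

definition nonarch_local_field :: "('a::field \<Rightarrow> int) \<Rightarrow> bool" where
  "nonarch_local_field v \<longleftrightarrow>
     discrete_valuation v \<and> val_complete v \<and> finite (residue_field v)"

definition int_vectors :: "('a::field \<Rightarrow> int) \<Rightarrow> nat \<Rightarrow> (nat \<Rightarrow> 'a) set" where
  "int_vectors v n = PiE {..<n} (\<lambda>_. val_ring v)"

definition vec_ball :: "('a::field \<Rightarrow> int) \<Rightarrow> nat \<Rightarrow> (nat \<Rightarrow> 'a) \<Rightarrow> nat \<Rightarrow> (nat \<Rightarrow> 'a) set" where
  "vec_ball v n a m = {x \<in> int_vectors v n. \<forall>i<n. x i - a i \<in> val_ideal v (int m)}"

text \<open>M is the additive Haar measure on o^n of total mass 1: a measure on the Borel
  sets of o^n (generated by the balls) which is translation invariant and has mass 1.\<close>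
definition haar_prob :: "('a::field \<Rightarrow> int) \<Rightarrow> nat \<Rightarrow> (nat \<Rightarrow> 'a) measure \<Rightarrow> bool" where
  "haar_prob v n M \<longleftrightarrow>
     space M = int_vectors v n \<and>
     sets M = sigma_sets (int_vectors v n) {vec_ball v n a m | a m. a \<in> int_vectors v n} \<and>
     emeasure M (space M) = 1 \<and>
     (\<forall>A\<in>sets M. \<forall>b\<in>int_vectors v n.
        emeasure M ((\<lambda>x. \<lambda>i\<in>{..<n}. x i + b i) ` A) = emeasure M A)"

definition diag_form :: "nat \<Rightarrow> (nat \<Rightarrow> 'a::field) \<Rightarrow> (nat \<Rightarrow> 'a) \<Rightarrow> 'a" where
  "diag_form n a x = (\<Sum>i<n. a i * x i ^ 2)"

definition XB :: "('a::field \<Rightarrow> int) \<Rightarrow> 'a \<Rightarrow> nat \<Rightarrow> (nat \<Rightarrow> 'a) \<Rightarrow> (nat \<Rightarrow> 'a) measure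
    \<Rightarrow> 'a \<Rightarrow> nat \<Rightarrow> real" where
  "XB v uf n a M \<rho> l =
     measure M {x \<in> int_vectors v n. diag_form n a x - \<rho> \<in> (\<lambda>t. 2 * uf ^ l * t) ` val_ring v}"

end

theory Submission
  imports Defs
begin


locale dvf =
  fixes v :: "'a::field \<Rightarrow> int"
  assumes dv: "discrete_valuation v"
begin

abbreviation I where "I \<equiv> val_ideal v"

lemma v_mult: "x \<noteq> 0 \<Longrightarrow> y \<noteq> 0 \<Longrightarrow> v (x * y) = v x + v y"
  using dv unfolding discrete_valuation_def by blast

lemma v_add: "x \<noteq> 0 \<Longrightarrow> y \<noteq> 0 \<Longrightarrow> x + y \<noteq> 0 \<Longrightarrow> min (v x) (v y) \<le> v (x + y)"
  using dv unfolding discrete_valuation_def by blast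

lemma v_one[simp]: "v 1 = 0"
  using v_mult[of 1 1] by simp

lemma v_inverse: "x \<noteq> 0 \<Longrightarrow> v (inverse x) = - v x"
  using v_mult[of x "inverse x"] by simp

lemma v_divide: "x \<noteq> 0 \<Longrightarrow> y \<noteq> 0 \<Longrightarrow> v (x / y) = v x - v y"
  by (simp add: divide_inverse v_mult v_inverse)

lemma v_m1[simp]: "v (-1) = 0"
  using v_mult[of "-1" "-1"] by simp

lemma v_minus[simp]: "v (- x) = v x"
proof (cases "x = 0")
  case True then show ?thesis by simp
next
  case False then show ?thesis using v_mult[of "-1" x] by simp
qed

lemma v_power: "x \<noteq> 0 \<Longrightarrow> v (x ^ k) = int k * v x"
  by (induction k) (auto simp: v_mult algebra_simps)

lemma I_iff: "x \<in> I m \<longleftrightarrow> x = 0 \<or> m \<le> v x"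
  by (simp add: val_ideal_def)

lemma I_zero[simp]: "0 \<in> I m" by (simp add: I_iff)

lemma I_add: "x + y \<in> I m" if "x \<in> I m" "y \<in> I m"
proof (cases "x = 0 \<or> y = 0 \<or> x + y = 0")
  case True then show ?thesis using that by (auto simp: I_iff)
next
  case False then show ?thesis using that v_add[of x y] by (auto simp: I_iff)
qed

lemma I_minus: "x \<in> I m \<Longrightarrow> - x \<in> I m"
  by (auto simp: I_iff)

lemma I_minus_iff[simp]: "- x \<in> I m \<longleftrightarrow> x \<in> I m"
  by (auto simp: I_iff)

lemma I_diff: "x \<in> I m \<Longrightarrow> y \<in> I m \<Longrightarrow> x - y \<in> I m"
  using I_add[of x m "-y"] by simp

lemma I_diff_sym: "x - y \<in> I m \<longleftrightarrow> y - x \<in> I m"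
  using I_minus_iff[of "x - y" m] by simp

lemma I_mult: "x \<in> I m \<Longrightarrow> y \<in> I k \<Longrightarrow> x * y \<in> I (m + k)"
  by (cases "x = 0"; cases "y = 0") (auto simp: I_iff v_mult)

lemma I_mono: "x \<in> I m \<Longrightarrow> k \<le> m \<Longrightarrow> x \<in> I k"
  by (auto simp: I_iff)

lemma I_sum: "(\<And>i. i \<in> S \<Longrightarrow> f i \<in> I m) \<Longrightarrow> sum f S \<in> I m"
  by (induction S rule: infinite_finite_induct) (auto intro: I_add)

lemma I_mult_cancel: "y \<noteq> 0 \<Longrightarrow> x * y \<in> I m \<longleftrightarrow> x \<in> I (m - v y)"
  by (cases "x = 0") (auto simp: I_iff v_mult)

lemma I_v: "x \<in> I (v x)" by (simp add: I_iff)

lemma I_all_zero: "(\<And>m. x \<in> I m) \<Longrightarrow> x = 0"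
  using I_iff[of x "v x + 1"] by auto

lemma I_not_iff: "x \<notin> I m \<longleftrightarrow> x \<noteq> 0 \<and> v x < m"
  by (auto simp: I_iff)

end


locale lfs = dvf v for v :: "'a::field \<Rightarrow> int" +
  fixes uf :: 'a
  assumes comp: "val_complete v" and finres: "finite (residue_field v)"
    and ufnz: "uf \<noteq> 0" and vuf: "v uf = 1"
begin

lemma uf_pow_nz[simp]: "uf ^ k \<noteq> 0" using ufnz by simp

lemma v_uf_pow[simp]: "v (uf ^ k) = int k"
  using v_power[OF ufnz] vuf by simp

lemma uf_pow_I: "uf ^ k \<in> I (int k)" using I_v[of "uf ^ k"] by simp

lemma O_eq: "val_ring v = I 0" by (simp add: val_ring_def)

lemma I_uf_mult: "x * uf ^ k \<in> I m \<longleftrightarrow> x \<in> I (m - int k)"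
  by (metis I_mult_cancel uf_pow_nz v_uf_pow)

lemma sqrt_aux:
  assumes w: "w \<in> I 1"
  shows "\<exists>s. s \<in> I 1 \<and> s ^ 2 + s = w"
proof -
  define s where "s = rec_nat 0 (\<lambda>_ t. w - t ^ 2)"
  have s0: "s 0 = 0" and sS: "\<And>j. s (Suc j) = w - (s j) ^ 2" by (simp_all add: s_def)
  have sI: "s j \<in> I 1" for j
  proof (induction j)
    case 0 then show ?case by (simp add: s0)
  next
    case (Suc j)
    have "s j ^ 2 \<in> I 2" using I_mult[OF Suc Suc] by (simp add: power2_eq_square)
    then have "s j ^ 2 \<in> I 1" by (rule I_mono) simp
    then show ?case using w by (simp add: sS I_diff)
  qed
  have step: "s (Suc j) - s j \<in> I (int j + 1)" for j
  proof (induction j)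
    case 0 then show ?case using w by (simp add: sS s0)
  next
    case (Suc j)
    have eq: "s (Suc (Suc j)) - s (Suc j) = - ((s (Suc j) - s j) * (s (Suc j) + s j))"
      by (simp add: sS algebra_simps power2_eq_square)
    have "s (Suc j) + s j \<in> I 1" using sI by (intro I_add)
    from I_mult[OF Suc this] show ?case unfolding eq by (simp add: add_ac)
  qed
  have tele: "s (N + k) - s N \<in> I (int N)" for N k
  proof (induction k)
    case 0 then show ?case by simp
  next
    case (Suc k)
    have "s (Suc (N + k)) - s (N + k) \<in> I (int N)"
      by (rule I_mono[OF step]) simp
    from I_add[OF this Suc] show ?case by simp
  qed
  have cauchy: "\<forall>m. \<exists>N. \<forall>i\<ge>N. \<forall>j\<ge>N. s i - s j \<in> I m"
  proof
    fix m
    show "\<exists>N. \<forall>i\<ge>N. \<forall>j\<ge>N. s i - s j \<in> I m"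
    proof (intro exI[of _ "nat m"] allI impI)
      fix i j assume "nat m \<le> i" "nat m \<le> j"
      then obtain a b where "i = nat m + a" "j = nat m + b" by (metis le_add_diff_inverse)
      then have "s i - s j = (s (nat m + a) - s (nat m)) - (s (nat m + b) - s (nat m))" by simp
      also have "\<dots> \<in> I (int (nat m))" by (intro I_diff tele)
      finally show "s i - s j \<in> I m" by (rule I_mono) simp
    qed
  qed
  then obtain L where L: "\<forall>m. \<exists>N. \<forall>i\<ge>N. s i - L \<in> I m"
    using comp unfolding val_complete_def by blast
  from L obtain N1 where N1: "\<forall>i\<ge>N1. s i - L \<in> I 1" by blast
  have "s N1 - (s N1 - L) \<in> I 1" using I_diff[OF sI[of N1] N1[rule_format, of N1]] by simp
  then have LI: "L \<in> I 1" by simp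
  have "L ^ 2 + L - w = 0"
  proof (rule I_all_zero)
    fix m
    from L obtain N where N: "\<forall>i\<ge>N. s i - L \<in> I m" by blast
    have eq: "L ^ 2 + L - w = (s N - L) * (- (L + s N)) - (s (Suc N) - L)"
      by (simp add: sS algebra_simps power2_eq_square)
    have "L + s N \<in> I 0" using LI sI by (intro I_mono[OF I_add]) auto
    then have "- (L + s N) \<in> I 0" by (rule I_minus)
    then have p: "(s N - L) * (- (L + s N)) \<in> I (m + 0)" using N by (intro I_mult) auto
    have "s (Suc N) - L \<in> I m" using N by simp
    from I_diff[OF p[simplified] this] show "L ^ 2 + L - w \<in> I m" unfolding eq by simp
  qed
  then show ?thesis using LI by (intro exI[of _ L]) simp
qed

lemma sqrt_exists:
  assumes two: "(2::'a) \<noteq> 0" and v2: "0 \<le> v 2" and y: "y \<in> I (2 * v 2 + 1)"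
  shows "\<exists>t. t \<noteq> 0 \<and> t ^ 2 = 1 + y"
proof -
  have v4: "v 4 = 2 * v 2" using v_mult[OF two two] by simp
  have four: "(4::'a) \<noteq> 0" using two mult_eq_0_iff[of "2::'a" 2] by simp
  have "y / 4 \<in> I 1"
  proof -
    have "(y / 4) * 4 \<in> I (2 * v 2 + 1)" using y four by simp
    then have "y / 4 \<in> I (2 * v 2 + 1 - v 4)" using I_mult_cancel[OF four] by blast
    then show ?thesis using v4 by simp
  qed
  then obtain s where s: "s ^ 2 + s = y / 4" using sqrt_aux by blast
  define t where "t = 1 + 2 * s"
  have "t ^ 2 = 1 + 4 * (s ^ 2 + s)" by (simp add: t_def algebra_simps power2_eq_square)
  also have "\<dots> = 1 + y" using s four by (simp add: field_simps)
  finally have t2: "t ^ 2 = 1 + y" .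
  have "1 + y \<noteq> 0"
  proof
    assume "1 + y = 0"
    then have "y = -1" by (simp add: eq_neg_iff_add_eq_0 add.commute)
    with y have "(-1::'a) \<in> I (2 * v 2 + 1)" by simp
    then show False using v2 by (simp add: I_iff)
  qed
  then show ?thesis using t2 by (intro exI[of _ t]) auto
qed


lemma res_equiv: "equiv (val_ring v) (residue_rel v)"
proof (rule equivI)
  show "residue_rel v \<subseteq> val_ring v \<times> val_ring v" by (auto simp: residue_rel_def)
  show "refl_on (val_ring v) (residue_rel v)"
    by (rule refl_onI) (auto simp: residue_rel_def)
  show "sym (residue_rel v)"
    by (auto simp: sym_def residue_rel_def intro: iffD1[OF I_diff_sym])
  show "trans (residue_rel v)"
  proof (rule transI)
    fix x y z assume "(x, y) \<in> residue_rel v" "(y, z) \<in> residue_rel v"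
    then show "(x, z) \<in> residue_rel v"
      using I_add[of "x - y" 1 "y - z"] by (auto simp: residue_rel_def)
  qed
qed

definition R1 where "R1 = (\<lambda>C. SOME y. y \<in> C) ` residue_field v"

lemma R1_props:
  shows "finite R1" "R1 \<subseteq> I 0"
    "\<And>x. x \<in> I 0 \<Longrightarrow> \<exists>r\<in>R1. x - r \<in> I 1"
    "\<And>r r'. r \<in> R1 \<Longrightarrow> r' \<in> R1 \<Longrightarrow> r - r' \<in> I 1 \<Longrightarrow> r = r'"
    "card R1 = card (residue_field v)"
proof -
  have E: "equiv (val_ring v) (residue_rel v)" by (rule res_equiv)
  have pick: "(SOME y. y \<in> C) \<in> C" if "C \<in> residue_field v" for C
    using that E unfolding residue_field_def
    by (metis in_quotient_imp_non_empty ex_in_conv someI_ex)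
  have sub: "C \<subseteq> val_ring v" if "C \<in> residue_field v" for C
    using that E unfolding residue_field_def by (meson in_quotient_imp_subset)
  show "finite R1" unfolding R1_def using finres by simp
  show "R1 \<subseteq> I 0" unfolding R1_def using pick sub O_eq by blast
  show "\<exists>r\<in>R1. x - r \<in> I 1" if x: "x \<in> I 0" for x
  proof -
    let ?C = "residue_rel v `` {x}"
    have C: "?C \<in> residue_field v" using x O_eq unfolding residue_field_def by (auto intro: quotientI)
    have "(x, SOME y. y \<in> ?C) \<in> residue_rel v" using pick[OF C] by simp
    then show ?thesis using C unfolding R1_def residue_rel_def by blast
  qed
  have inj: "inj_on (\<lambda>C. SOME y. y \<in> C) (residue_field v)"
  proof (rule inj_onI)
    fix C D assume C: "C \<in> residue_field v" and D: "D \<in> residue_field v"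
      and eq: "(SOME y. y \<in> C) = (SOME y. y \<in> D)"
    have "(SOME y. y \<in> C) \<in> C \<inter> D" using pick[OF C] pick[OF D] eq by simp
    then show "C = D" using E C D unfolding residue_field_def
      by (metis IntE quotient_disj disjoint_iff)
  qed
  then show "card R1 = card (residue_field v)" unfolding R1_def by (rule card_image)
  show "r = r'" if r: "r \<in> R1" and r': "r' \<in> R1" and d: "r - r' \<in> I 1" for r r'
  proof -
    obtain C where C: "C \<in> residue_field v" "r = (SOME y. y \<in> C)" using r unfolding R1_def by blast
    obtain D where D: "D \<in> residue_field v" "r' = (SOME y. y \<in> D)" using r' unfolding R1_def by blast
    have rC: "r \<in> C" and rD: "r' \<in> D" using pick C D by auto
    have "(r, r') \<in> residue_rel v" using d rC rD sub C D unfolding residue_rel_def by auto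
    then have "r' \<in> C"
      using E C rC unfolding residue_field_def
      by (metis quotient_eq_iff equiv_class_eq_iff in_quotient_imp_closed)
    then have "C = D" using E C D rD unfolding residue_field_def
      by (metis quotient_disj disjoint_iff)
    then show ?thesis using C D by simp
  qed
qed

lemma finite_reps: "\<exists>R. finite R \<and> R \<subseteq> I 0 \<and> (\<forall>x\<in>I 0. \<exists>r\<in>R. x - r \<in> I (int N))"
proof (induction N)
  case 0 then show ?case by (intro exI[of _ "{0}"]) (auto simp: I_iff)
next
  case (Suc N)
  then obtain R where R: "finite R" "R \<subseteq> I 0" "\<forall>x\<in>I 0. \<exists>r\<in>R. x - r \<in> I (int N)" by blast
  define R' where "R' = (\<lambda>(r, c). r + uf ^ N * c) ` (R \<times> R1)"
  have "finite R'" unfolding R'_def using R(1) R1_props(1) by simp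
  moreover have "R' \<subseteq> I 0"
  proof
    fix y assume "y \<in> R'"
    then obtain r c where rc: "r \<in> R" "c \<in> R1" "y = r + uf ^ N * c" unfolding R'_def by auto
    have "uf ^ N * c \<in> I (int N + 0)" using uf_pow_I rc(2) R1_props(2) by (intro I_mult) auto
    then have "uf ^ N * c \<in> I 0" by (rule I_mono) simp
    then show "y \<in> I 0" using rc R(2) by (auto intro: I_add)
  qed
  moreover have "\<exists>r\<in>R'. x - r \<in> I (int (Suc N))" if x: "x \<in> I 0" for x
  proof -
    obtain r where r: "r \<in> R" "x - r \<in> I (int N)" using R(3) x by blast
    define y where "y = (x - r) / uf ^ N"
    have xr: "x - r = y * uf ^ N" by (simp add: y_def ufnz)
    have "y \<in> I 0" using r(2) unfolding xr I_uf_mult by simp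
    then obtain c where c: "c \<in> R1" "y - c \<in> I 1" using R1_props(3) by blast
    have "x - (r + uf ^ N * c) = (y - c) * uf ^ N" using xr by (simp add: algebra_simps)
    also have "\<dots> \<in> I (int (Suc N))" unfolding I_uf_mult using c(2) by simp
    finally have "x - (r + uf ^ N * c) \<in> I (int (Suc N))" .
    moreover have "r + uf ^ N * c \<in> R'" using r c unfolding R'_def by force
    ultimately show ?thesis by blast
  qed
  ultimately show ?case by blast
qed

end


locale hr = lfs v uf for v :: "'a::field \<Rightarrow> int" and uf +
  fixes n :: nat and M :: "(nat \<Rightarrow> 'a) measure"
  assumes haar: "haar_prob v n M"
begin

abbreviation V where "V \<equiv> int_vectors v n"
abbreviation ball where "ball \<equiv> vec_ball v n"

lemma spaceM: "space M = V" using haar by (simp add: haar_prob_def)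
lemma setsM: "sets M = sigma_sets V {ball a m | a m. a \<in> V}" using haar by (simp add: haar_prob_def)
lemma M1: "emeasure M V = 1" using haar spaceM by (simp add: haar_prob_def)
lemma transl: "A \<in> sets M \<Longrightarrow> b \<in> V \<Longrightarrow> emeasure M ((\<lambda>x. \<lambda>i\<in>{..<n}. x i + b i) ` A) = emeasure M A"
  using haar by (simp add: haar_prob_def)

lemma finM: "emeasure M A \<noteq> \<infinity>"
proof -
  have "emeasure M A \<le> emeasure M (space M)" by (rule emeasure_space)
  also have "\<dots> = 1" using M1 spaceM by simp
  finally show ?thesis by (auto simp: top_unique)
qed

lemma V_iff: "x \<in> V \<longleftrightarrow> (\<forall>i<n. x i \<in> I 0) \<and> (\<forall>i. n \<le> i \<longrightarrow> x i = undefined)"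
  by (auto simp: int_vectors_def PiE_iff O_eq extensional_def)

lemma ball_iff: "x \<in> ball a m \<longleftrightarrow> x \<in> V \<and> (\<forall>i<n. x i - a i \<in> I (int m))"
  by (simp add: vec_ball_def)

lemma ball_sets: "a \<in> V \<Longrightarrow> ball a m \<in> sets M"
  unfolding setsM by (rule sigma_sets.Basic) blast

lemma ball_sub: "ball a m \<subseteq> V" by (auto simp: ball_iff)

lemma ball_eq: "ball b m = ball a m" if b: "b \<in> ball a m"
proof -
  have bi: "\<forall>i<n. b i - a i \<in> I (int m)" using b by (simp add: ball_iff)
  have "x \<in> ball b m \<longleftrightarrow> x \<in> ball a m" for x
  proof -
    have "(x i - b i \<in> I (int m)) \<longleftrightarrow> (x i - a i \<in> I (int m))" if "i < n" for i
    proof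
      assume "x i - b i \<in> I (int m)"
      from I_add[OF this bi[rule_format, OF that]] show "x i - a i \<in> I (int m)" by simp
    next
      assume "x i - a i \<in> I (int m)"
      from I_diff[OF this bi[rule_format, OF that]] show "x i - b i \<in> I (int m)" by simp
    qed
    then show ?thesis by (auto simp: ball_iff)
  qed
  then show ?thesis by blast
qed

lemma ball_disj: "ball a m \<noteq> ball b m \<Longrightarrow> ball a m \<inter> ball b m = {}"
  using ball_eq by blast

lemma ball_self: "a \<in> V \<Longrightarrow> a \<in> ball a m" by (simp add: ball_iff)

lemma ball0: "a \<in> V \<Longrightarrow> ball a 0 = V"
  by (auto simp: ball_iff V_iff intro!: I_diff)

lemma finite_balls: "finite {ball a m | a. a \<in> V}"
proof -
  obtain R where R: "finite R" "R \<subseteq> I 0" "\<forall>x\<in>I 0. \<exists>r\<in>R. x - r \<in> I (int m)"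
    using finite_reps by blast
  have "{ball a m | a. a \<in> V} \<subseteq> (\<lambda>r. ball r m) ` (PiE {..<n} (\<lambda>_. R))"
  proof
    fix B assume "B \<in> {ball a m | a. a \<in> V}"
    then obtain a where a: "a \<in> V" "B = ball a m" by blast
    define r where "r = (\<lambda>i\<in>{..<n}. SOME r. r \<in> R \<and> a i - r \<in> I (int m))"
    have ri: "r i \<in> R \<and> a i - r i \<in> I (int m)" if "i < n" for i
    proof -
      have "a i \<in> I 0" using a that by (simp add: V_iff)
      then have "\<exists>r. r \<in> R \<and> a i - r \<in> I (int m)" using R by blast
      from someI_ex[OF this] show ?thesis unfolding r_def using that by simp
    qed
    have rP: "r \<in> PiE {..<n} (\<lambda>_. R)" using ri by (auto simp: r_def)
    have "a \<in> ball r m"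
    proof -
      have "r \<in> V" using ri R(2) by (auto simp: V_iff r_def)
      then show ?thesis using a ri by (auto simp: ball_iff)
    qed
    then have "ball r m = ball a m" using ball_eq by simp
    then show "B \<in> (\<lambda>r. ball r m) ` (PiE {..<n} (\<lambda>_. R))" using a rP by auto
  qed
  moreover have "finite ((\<lambda>r. ball r m) ` (PiE {..<n} (\<lambda>_. R)))"
    using R(1) by (intro finite_imageI finite_PiE) auto
  ultimately show ?thesis by (rule finite_subset)
qed

definition sat :: "nat \<Rightarrow> (nat \<Rightarrow> 'a) set \<Rightarrow> bool" where
  "sat m A \<longleftrightarrow> A \<subseteq> V \<and> (\<forall>x\<in>A. \<forall>y. y \<in> ball x m \<longrightarrow> y \<in> A)"

definition balls_of where "balls_of m A = {ball a m | a. a \<in> A}"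

lemma sat_union: "sat m A \<Longrightarrow> A = \<Union>(balls_of m A)"
  unfolding sat_def balls_of_def using ball_self by blast

lemma balls_of_fin: "A \<subseteq> V \<Longrightarrow> finite (balls_of m A)"
  unfolding balls_of_def by (rule finite_subset[OF _ finite_balls]) blast

lemma sat_sets: "sat m A \<Longrightarrow> A \<in> sets M"
proof -
  assume s: "sat m A"
  have "\<Union>(balls_of m A) \<in> sets M"
    using s by (intro sets.finite_Union balls_of_fin) (auto simp: sat_def balls_of_def intro!: ball_sets)
  then show ?thesis using sat_union[OF s] by simp
qed

lemma measure_sat: "sat m A \<Longrightarrow> measure M A = (\<Sum>B\<in>balls_of m A. measure M B)"
proof -
  assume s: "sat m A"
  have "measure M (\<Union>B\<in>balls_of m A. id B) = (\<Sum>B\<in>balls_of m A. measure M (id B))"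
  proof (rule measure_finite_Union)
    show "finite (balls_of m A)" using s by (intro balls_of_fin) (simp add: sat_def)
    show "id ` balls_of m A \<subseteq> sets M" using s by (auto simp: sat_def balls_of_def intro!: ball_sets)
    show "disjoint_family_on id (balls_of m A)"
      unfolding disjoint_family_on_def balls_of_def using ball_disj by auto
  qed (rule finM)
  then show ?thesis using sat_union[OF s] by simp
qed


definition tr :: "(nat \<Rightarrow> 'a) \<Rightarrow> (nat \<Rightarrow> 'a) \<Rightarrow> (nat \<Rightarrow> 'a)" where
  "tr b x = (\<lambda>i\<in>{..<n}. x i + b i)"

lemma tr_V: "b \<in> V \<Longrightarrow> x \<in> V \<Longrightarrow> tr b x \<in> V"
  by (auto simp: tr_def V_iff intro: I_add)

lemma tr_ball: assumes b: "b \<in> V" and c: "c \<in> V" shows "tr b ` ball c m = ball (tr b c) m"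
proof
  show "tr b ` ball c m \<subseteq> ball (tr b c) m"
    using b tr_V[OF b, unfolded tr_def] by (auto simp: ball_iff tr_def)
  show "ball (tr b c) m \<subseteq> tr b ` ball c m"
  proof
    fix y assume y: "y \<in> ball (tr b c) m"
    define x where "x = (\<lambda>i\<in>{..<n}. y i - b i)"
    have yV: "y \<in> V" using y by (simp add: ball_iff)
    have xV: "x \<in> V" using yV b by (auto simp: x_def V_iff intro: I_diff)
    have "x \<in> ball c m" using y xV by (auto simp: ball_iff x_def tr_def algebra_simps)
    moreover have "y = tr b x" using yV by (auto simp: tr_def x_def V_iff)
    ultimately show "y \<in> tr b ` ball c m" by blast
  qed
qed

lemma tr_meas: "A \<in> sets M \<Longrightarrow> b \<in> V \<Longrightarrow> measure M (tr b ` A) = measure M A"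
  unfolding measure_def tr_def using transl by simp

lemma ball_meas_eq: assumes "a \<in> V" "c \<in> V" shows "measure M (ball a m) = measure M (ball c m)"
proof -
  define b where "b = (\<lambda>i\<in>{..<n}. a i - c i)"
  have bV: "b \<in> V" using assms by (auto simp: b_def V_iff intro: I_diff)
  have "tr b c = a" using assms by (auto simp: tr_def b_def V_iff)
  then have "ball a m = tr b ` ball c m" using tr_ball[OF bV assms(2)] by simp
  then show ?thesis using tr_meas[OF ball_sets[OF assms(2)] bV] by simp
qed

lemma R1_nonempty: "R1 \<noteq> {}" using R1_props(3)[of 0] by auto

lemma q_pos: "card (residue_field v) > 0"
  using R1_props(1,5) R1_nonempty by (metis card_gt_0_iff)

definition pt where "pt a d m = (\<lambda>i\<in>{..<n}. a i + uf ^ m * d i)"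

lemma pt_V: "a \<in> V \<Longrightarrow> d \<in> PiE {..<n} (\<lambda>_. R1) \<Longrightarrow> pt a d m \<in> V"
proof -
  assume a: "a \<in> V" and d: "d \<in> PiE {..<n} (\<lambda>_. R1)"
  have "uf ^ m * d i \<in> I 0" if "i < n" for i
  proof -
    have "d i \<in> I 0" using d that R1_props(2) by auto
    then have "uf ^ m * d i \<in> I (int m + 0)" by (intro I_mult uf_pow_I)
    then show ?thesis by (rule I_mono) simp
  qed
  then show ?thesis using a by (auto simp: pt_def V_iff intro: I_add)
qed

lemma ball_split: assumes a: "a \<in> V"
  shows "ball a m = (\<Union>d\<in>PiE {..<n} (\<lambda>_. R1). ball (pt a d m) (Suc m))"
    and "disjoint_family_on (\<lambda>d. ball (pt a d m) (Suc m)) (PiE {..<n} (\<lambda>_. R1))"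
proof -
  show "ball a m = (\<Union>d\<in>PiE {..<n} (\<lambda>_. R1). ball (pt a d m) (Suc m))"
  proof
    show "ball a m \<subseteq> (\<Union>d\<in>PiE {..<n} (\<lambda>_. R1). ball (pt a d m) (Suc m))"
    proof
      fix x assume x: "x \<in> ball a m"
      have xi: "x i - a i \<in> I (int m)" if "i < n" for i using x that by (simp add: ball_iff)
      define y where "y i = (x i - a i) / uf ^ m" for i
      have xy: "x i - a i = y i * uf ^ m" for i by (simp add: y_def ufnz)
      have yO: "y i \<in> I 0" if "i < n" for i using xi[OF that] unfolding xy I_uf_mult by simp
      have ex: "\<exists>c. c \<in> R1 \<and> y i - c \<in> I 1" if "i < n" for i using R1_props(3)[OF yO[OF that]] by blast
      define d where "d = (\<lambda>i\<in>{..<n}. SOME c. c \<in> R1 \<and> y i - c \<in> I 1)"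
      have di: "d i \<in> R1 \<and> y i - d i \<in> I 1" if "i < n" for i
        using someI_ex[OF ex[OF that]] that by (simp add: d_def)
      have dP: "d \<in> PiE {..<n} (\<lambda>_. R1)" using di by (auto simp: d_def)
      have "x i - pt a d m i \<in> I (int (Suc m))" if "i < n" for i
      proof -
        have "x i - pt a d m i = (y i - d i) * uf ^ m" using that by (simp add: pt_def algebra_simps xy[symmetric])
        also have "\<dots> \<in> I (int (Suc m))" unfolding I_uf_mult using di[OF that] by simp
        finally show ?thesis .
      qed
      then have "x \<in> ball (pt a d m) (Suc m)" using x by (simp add: ball_iff)
      then show "x \<in> (\<Union>d\<in>PiE {..<n} (\<lambda>_. R1). ball (pt a d m) (Suc m))" using dP by blast
    qed
    show "(\<Union>d\<in>PiE {..<n} (\<lambda>_. R1). ball (pt a d m) (Suc m)) \<subseteq> ball a m"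
    proof
      fix x assume "x \<in> (\<Union>d\<in>PiE {..<n} (\<lambda>_. R1). ball (pt a d m) (Suc m))"
      then obtain d where d: "d \<in> PiE {..<n} (\<lambda>_. R1)" and x: "x \<in> ball (pt a d m) (Suc m)" by blast
      have "x i - a i \<in> I (int m)" if "i < n" for i
      proof -
        have "x i - pt a d m i \<in> I (int (Suc m))" using x that by (simp add: ball_iff)
        then have 1: "x i - pt a d m i \<in> I (int m)" by (rule I_mono) simp
        have "d i \<in> I 0" using d that R1_props(2) by auto
        then have "uf ^ m * d i \<in> I (int m + 0)" by (intro I_mult uf_pow_I)
        from I_add[OF 1 this[simplified]] show ?thesis using that by (simp add: pt_def)
      qed
      then show "x \<in> ball a m" using x by (simp add: ball_iff)
    qed
  qed
  show "disjoint_family_on (\<lambda>d. ball (pt a d m) (Suc m)) (PiE {..<n} (\<lambda>_. R1))"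
  unfolding disjoint_family_on_def
  proof (intro ballI impI)
    fix d d' assume d: "d \<in> PiE {..<n} (\<lambda>_. R1)" and d': "d' \<in> PiE {..<n} (\<lambda>_. R1)" and ne: "d \<noteq> d'"
    then obtain i where i: "i < n" "d i \<noteq> d' i" by (metis PiE_ext lessThan_iff)
    show "ball (pt a d m) (Suc m) \<inter> ball (pt a d' m) (Suc m) = {}"
    proof (rule ccontr)
      assume "ball (pt a d m) (Suc m) \<inter> ball (pt a d' m) (Suc m) \<noteq> {}"
      then obtain x where x1: "x \<in> ball (pt a d m) (Suc m)" and x2: "x \<in> ball (pt a d' m) (Suc m)" by blast
      have h1: "x i - pt a d' m i \<in> I (int (Suc m))" using x2 i by (simp add: ball_iff)
      have h2: "x i - pt a d m i \<in> I (int (Suc m))" using x1 i by (simp add: ball_iff)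
      have "(x i - pt a d' m i) - (x i - pt a d m i) \<in> I (int (Suc m))"
        using I_diff[OF h1 h2] .
      moreover have "(x i - pt a d' m i) - (x i - pt a d m i) = (d i - d' i) * uf ^ m"
        using i by (simp add: pt_def algebra_simps)
      ultimately have "(d i - d' i) * uf ^ m \<in> I (int (Suc m))" by simp
      then have "d i - d' i \<in> I 1" unfolding I_uf_mult by simp
      then show False using R1_props(4)[of "d i" "d' i"] d d' i by auto
    qed
  qed
qed

lemma ball_measure: "a \<in> V \<Longrightarrow> measure M (ball a m) = 1 / real (card (residue_field v)) ^ (n * m)"
proof (induction m arbitrary: a)
  case 0
  then show ?case using M1 by (simp add: ball0 measure_def)
next
  case (Suc m)
  let ?P = "PiE {..<n} (\<lambda>_. R1)"
  let ?q = "real (card (residue_field v))"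
  have "measure M (ball a m) = measure M (\<Union>d\<in>?P. ball (pt a d m) (Suc m))"
    using ball_split(1)[OF Suc.prems] by simp
  also have "\<dots> = (\<Sum>d\<in>?P. measure M (ball (pt a d m) (Suc m)))"
    using ball_split(2)[OF Suc.prems] R1_props(1)
    by (intro measure_finite_Union finM) (auto intro!: ball_sets pt_V Suc.prems finite_PiE)
  also have "\<dots> = (\<Sum>d\<in>?P. measure M (ball a (Suc m)))"
    using Suc.prems by (intro sum.cong refl ball_meas_eq pt_V)
  also have "\<dots> = ?q ^ n * measure M (ball a (Suc m))"
    using R1_props(1,5) by (simp add: card_PiE)
  finally have "?q ^ n * measure M (ball a (Suc m)) = 1 / ?q ^ (n * m)" using Suc by simp
  then show ?case using q_pos by (simp add: field_simps power_add power_mult_distrib mult.commute power_mult)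
qed

end


context hr
begin

definition sc :: "(nat \<Rightarrow> 'a) \<Rightarrow> (nat \<Rightarrow> 'a)" where
  "sc x = (\<lambda>i\<in>{..<n}. uf * x i)"

lemma sc_V: "x \<in> V \<Longrightarrow> sc x \<in> V"
proof -
  assume x: "x \<in> V"
  have "uf * x i \<in> I 0" if "i < n" for i
  proof -
    have "uf * x i \<in> I (1 + 0)" using x that uf_pow_I[of 1] by (intro I_mult) (auto simp: V_iff)
    then show ?thesis by (rule I_mono) simp
  qed
  then show ?thesis by (auto simp: sc_def V_iff)
qed

lemma sc_inj: "inj_on sc V"
proof (rule inj_onI)
  fix x y assume x: "x \<in> V" and y: "y \<in> V" and e: "sc x = sc y"
  have "x i = y i" for i
  proof (cases "i < n")
    case True
    have "sc x i = sc y i" using e by simp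
    then have "uf * x i = uf * y i" using True unfolding sc_def by simp
    then show ?thesis using ufnz by simp
  next
    case False then show ?thesis using x y by (simp add: V_iff)
  qed
  then show "x = y" by blast
qed

lemma sc_ball: assumes a: "a \<in> V" shows "sc ` ball a m = ball (sc a) (Suc m)"
proof
  show "sc ` ball a m \<subseteq> ball (sc a) (Suc m)"
  proof
    fix y assume "y \<in> sc ` ball a m"
    then obtain x where x: "x \<in> ball a m" "y = sc x" by blast
    have "y i - sc a i \<in> I (int (Suc m))" if "i < n" for i
    proof -
      have "y i - sc a i = (x i - a i) * uf ^ 1" using x that by (simp add: sc_def algebra_simps)
      also have "\<dots> \<in> I (int (Suc m))" unfolding I_uf_mult using x that by (simp add: ball_iff)
      finally show ?thesis .
    qed
    then show "y \<in> ball (sc a) (Suc m)" using x sc_V by (simp add: ball_iff)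
  qed
  show "ball (sc a) (Suc m) \<subseteq> sc ` ball a m"
  proof
    fix y assume y: "y \<in> ball (sc a) (Suc m)"
    define x where "x = (\<lambda>i\<in>{..<n}. y i / uf)"
    have yx: "y i = x i * uf ^ 1" if "i < n" for i using that ufnz by (simp add: x_def)
    have d: "(x i - a i) * uf ^ 1 \<in> I (int (Suc m))" if "i < n" for i
    proof -
      have "(x i - a i) * uf ^ 1 = y i - sc a i" using that yx[OF that] by (simp add: sc_def algebra_simps)
      then show ?thesis using y that by (simp add: ball_iff)
    qed
    then have dm: "x i - a i \<in> I (int m)" if "i < n" for i using d[OF that] unfolding I_uf_mult by simp
    have "x i \<in> I 0" if "i < n" for i
    proof -
      have "a i \<in> I 0" using a that by (simp add: V_iff)
      have "x i - a i \<in> I 0" using dm[OF that] by (rule I_mono) simp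
      from I_add[OF this \<open>a i \<in> I 0\<close>] show ?thesis by simp
    qed
    then have xV: "x \<in> V" by (auto simp: V_iff x_def)
    have "x \<in> ball a m" using xV dm by (simp add: ball_iff)
    moreover have "y = sc x"
    proof
      fix i show "y i = sc x i"
        using y yx by (cases "i < n") (auto simp: sc_def ball_iff V_iff)
    qed
    ultimately show "y \<in> sc ` ball a m" by blast
  qed
qed

lemma measure_sat_count: "sat m A \<Longrightarrow> measure M A = real (card (balls_of m A)) / real (card (residue_field v)) ^ (n * m)"
proof -
  assume s: "sat m A"
  have "measure M A = (\<Sum>B\<in>balls_of m A. measure M B)" using measure_sat[OF s] .
  also have "\<dots> = (\<Sum>B\<in>balls_of m A. 1 / real (card (residue_field v)) ^ (n * m))"
  proof (rule sum.cong[OF refl])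
    fix B assume "B \<in> balls_of m A"
    then obtain a where "a \<in> A" "B = ball a m" by (auto simp: balls_of_def)
    then show "measure M B = 1 / real (card (residue_field v)) ^ (n * m)"
      using s ball_measure by (auto simp: sat_def)
  qed
  finally show ?thesis by simp
qed

lemma sat_sc: assumes s: "sat m A" shows "sat (Suc m) (sc ` A)"
  unfolding sat_def
proof (intro conjI ballI allI impI)
  show "sc ` A \<subseteq> V" using s sc_V by (auto simp: sat_def)
  fix y z assume y: "y \<in> sc ` A" and z: "z \<in> ball y (Suc m)"
  then obtain x where x: "x \<in> A" "y = sc x" by blast
  have xV: "x \<in> V" using s x by (auto simp: sat_def)
  have "z \<in> sc ` ball x m" using sc_ball[OF xV] z x by simp
  moreover have "ball x m \<subseteq> A" using s x by (auto simp: sat_def)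
  ultimately show "z \<in> sc ` A" by blast
qed

lemma balls_of_sc: assumes s: "sat m A" shows "balls_of (Suc m) (sc ` A) = (\<lambda>B. sc ` B) ` balls_of m A"
proof
  show "balls_of (Suc m) (sc ` A) \<subseteq> (\<lambda>B. sc ` B) ` balls_of m A"
  proof
    fix C assume "C \<in> balls_of (Suc m) (sc ` A)"
    then obtain x where x: "x \<in> A" "C = ball (sc x) (Suc m)" by (auto simp: balls_of_def)
    then have "C = sc ` ball x m" using sc_ball s by (auto simp: sat_def)
    then show "C \<in> (\<lambda>B. sc ` B) ` balls_of m A" using x by (auto simp: balls_of_def)
  qed
  show "(\<lambda>B. sc ` B) ` balls_of m A \<subseteq> balls_of (Suc m) (sc ` A)"
  proof
    fix C assume "C \<in> (\<lambda>B. sc ` B) ` balls_of m A"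
    then obtain x where x: "x \<in> A" "C = sc ` ball x m" by (auto simp: balls_of_def)
    then have "C = ball (sc x) (Suc m)" using sc_ball s by (auto simp: sat_def)
    then show "C \<in> balls_of (Suc m) (sc ` A)" using x by (auto simp: balls_of_def)
  qed
qed

lemma measure_sc: assumes s: "sat m A"
  shows "measure M (sc ` A) = measure M A / real (card (residue_field v)) ^ n"
proof -
  have fin: "finite (balls_of m A)" using s by (intro balls_of_fin) (simp add: sat_def)
  have "inj_on (\<lambda>B. sc ` B) (balls_of m A)"
  proof (rule inj_on_subset[OF inj_on_image])
    show "inj_on sc (\<Union>(balls_of m A))" using sc_inj
      by (rule inj_on_subset) (use ball_sub in \<open>auto simp: balls_of_def\<close>)
  qed simp
  then have "card (balls_of (Suc m) (sc ` A)) = card (balls_of m A)"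
    using balls_of_sc[OF s] by (simp add: card_image)
  then have e1: "measure M (sc ` A) = real (card (balls_of m A)) / real (card (residue_field v)) ^ (n * Suc m)"
    using measure_sat_count[OF sat_sc[OF s]] by simp
  have e2: "measure M A = real (card (balls_of m A)) / real (card (residue_field v)) ^ (n * m)"
    using measure_sat_count[OF s] .
  have "real (card (residue_field v)) ^ (n * Suc m) = real (card (residue_field v)) ^ (n * m) * real (card (residue_field v)) ^ n"
    by (simp add: power_add[symmetric] algebra_simps)
  then show ?thesis unfolding e1 e2 by simp
qed

end


locale qf = hr v uf n M for v :: "'a::field \<Rightarrow> int" and uf n M +
  fixes a :: "nat \<Rightarrow> 'a"
  assumes coef: "\<forall>i<n. a i \<noteq> 0 \<and> 0 \<le> v (a i) \<and> v (a i) \<le> 1"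
    and two: "(2::'a) \<noteq> 0" and v2: "1 \<le> v 2"
begin

abbreviation B where "B \<equiv> diag_form n a"

definition G where "G \<sigma> L = {x \<in> V. B x - \<sigma> \<in> I (v 2 + int L)}"

lemma aI: "i < n \<Longrightarrow> a i \<in> I 0" using coef by (simp add: I_iff)

lemma diag_cong: "(\<And>j. j < n \<Longrightarrow> x j = y j) \<Longrightarrow> B x = B y"
  unfolding diag_form_def by (rule sum.cong) auto

lemma diag_upd: "i < n \<Longrightarrow> B (x(i := z)) = B x + a i * (z ^ 2 - x i ^ 2)"
proof -
  assume i: "i < n"
  have "B (x(i := z)) = (\<Sum>j<n. a j * x j ^ 2 + (if j = i then a i * (z ^ 2 - x i ^ 2) else 0))"
    unfolding diag_form_def by (rule sum.cong) (auto simp: algebra_simps)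
  also have "\<dots> = B x + a i * (z ^ 2 - x i ^ 2)"
    using i by (simp add: sum.distrib diag_form_def)
  finally show ?thesis .
qed

lemma diag_sc: "B (sc x) = uf ^ 2 * B x"
proof -
  have "B (sc x) = (\<Sum>i<n. uf ^ 2 * (a i * x i ^ 2))"
    unfolding diag_form_def sc_def by (rule sum.cong) (auto simp: power_mult_distrib)
  then show ?thesis by (simp add: diag_form_def sum_distrib_left)
qed

lemma B_diff: assumes x: "x \<in> V" and y: "y \<in> V" and d: "\<forall>i<n. x i - y i \<in> I N"
  shows "B x - B y \<in> I N"
proof -
  have "B x - B y = (\<Sum>i<n. a i * (x i + y i) * (x i - y i))"
    unfolding diag_form_def sum_subtractf[symmetric]
    by (rule sum.cong) (auto simp: algebra_simps power2_eq_square)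
  also have "\<dots> \<in> I N"
  proof (rule I_sum)
    fix i assume "i \<in> {..<n}"
    then have i: "i < n" by simp
    have "x i + y i \<in> I 0" using x y i by (intro I_add) (auto simp: V_iff)
    then have "a i * (x i + y i) \<in> I (0 + 0)" using aI[OF i] by (intro I_mult)
    then have "a i * (x i + y i) * (x i - y i) \<in> I (0 + N)" using d i by (intro I_mult) auto
    then show "a i * (x i + y i) * (x i - y i) \<in> I N" by simp
  qed
  finally show ?thesis .
qed

lemma G_sat: assumes "v 2 + int L \<le> int m" shows "sat m (G \<sigma> L)"
  unfolding sat_def
proof (intro conjI ballI allI impI)
  show "G \<sigma> L \<subseteq> V" by (auto simp: G_def)
  fix x y assume x: "x \<in> G \<sigma> L" and y: "y \<in> ball x m"
  have yV: "y \<in> V" and xV: "x \<in> V" using x y by (auto simp: ball_iff G_def)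
  have "B y - B x \<in> I (int m)" using y xV by (intro B_diff) (auto simp: ball_iff)
  then have 1: "B y - B x \<in> I (v 2 + int L)" by (rule I_mono) (use assms in simp)
  have 2: "B x - \<sigma> \<in> I (v 2 + int L)" using x by (simp add: G_def)
  from I_add[OF 1 2] show "y \<in> G \<sigma> L" using yV by (simp add: G_def)
qed

lemma G_sets: "G \<sigma> L \<in> sets M"
  by (rule sat_sets[OF G_sat[of L "nat (v 2 + int L)"]]) (use v2 in simp)

lemma img_eq: "(\<lambda>t. 2 * uf ^ l * t) ` val_ring v = I (v 2 + int l)"
proof
  have nz: "2 * uf ^ l \<noteq> 0" using two ufnz by simp
  have vv: "v (2 * uf ^ l) = v 2 + int l" using v_mult[OF two uf_pow_nz] by simp
  show "(\<lambda>t. 2 * uf ^ l * t) ` val_ring v \<subseteq> I (v 2 + int l)"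
  proof
    fix y assume "y \<in> (\<lambda>t. 2 * uf ^ l * t) ` val_ring v"
    then obtain t where t: "t \<in> I 0" "y = 2 * uf ^ l * t" by (auto simp: O_eq)
    have "2 * uf ^ l * t \<in> I (v (2 * uf ^ l) + 0)" using t by (intro I_mult I_v)
    then show "y \<in> I (v 2 + int l)" using t vv by simp
  qed
  show "I (v 2 + int l) \<subseteq> (\<lambda>t. 2 * uf ^ l * t) ` val_ring v"
  proof
    fix y assume y: "y \<in> I (v 2 + int l)"
    define t where "t = y / (2 * uf ^ l)"
    have yt: "y = t * (2 * uf ^ l)" using nz by (simp add: t_def)
    have "t \<in> I 0" using y unfolding yt I_mult_cancel[OF nz] vv by simp
    then show "y \<in> (\<lambda>t. 2 * uf ^ l * t) ` val_ring v" using yt O_eq by (auto simp: mult.commute)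
  qed
qed

lemma XB_eq: "XB v uf n a M \<sigma> l = measure M (G \<sigma> l)"
  unfolding XB_def G_def img_eq by simp

lemma unit_coord_bound:
  assumes aniso: "\<forall>x::nat \<Rightarrow> 'a. (\<exists>i<n. x i \<noteq> 0) \<longrightarrow> diag_form n a x \<noteq> 0"
    and y: "y \<in> V" and By: "B y \<in> I (2 * v 2 + 2)" and i: "i < n"
  shows "y i \<in> I 1"
proof (rule ccontr)
  assume nI: "y i \<notin> I 1"
  have yO: "y i \<in> I 0" using y i by (simp add: V_iff)
  have yi0: "y i \<noteq> 0" using nI by (auto simp: I_iff)
  have vy: "v (y i) = 0" using nI yO by (auto simp: I_iff)
  have ai: "a i \<noteq> 0" "v (a i) \<le> 1" using coef i by auto
  have y2: "y i ^ 2 \<noteq> 0" using yi0 by simp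
  have den: "a i * y i ^ 2 \<noteq> 0" using ai(1) y2 by simp
  have vy2: "v (y i ^ 2) = 0" using v_power[OF yi0, of 2] vy by simp
  have vden: "v (a i * y i ^ 2) = v (a i)" using v_mult[OF ai(1) y2] vy2 by simp
  define w where "w = - (B y) / (a i * y i ^ 2)"
  have wden: "w * (a i * y i ^ 2) = - B y" using den by (simp add: w_def)
  have wI: "w \<in> I (2 * v 2 + 1)"
  proof -
    have "w * (a i * y i ^ 2) \<in> I (2 * v 2 + 2)" using By unfolding wden by (rule I_minus)
    then have "w \<in> I (2 * v 2 + 2 - v (a i * y i ^ 2))" using I_mult_cancel[OF den] by blast
    then have "w \<in> I (2 * v 2 + 2 - v (a i))" using vden by simp
    then show ?thesis by (rule I_mono) (use ai(2) in linarith)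
  qed
  have v20: "0 \<le> v 2" using v2 by simp
  obtain t where t: "t \<noteq> 0" "t ^ 2 = 1 + w" using sqrt_exists[OF two v20 wI] by blast
  define x where "x = y(i := t * y i)"
  have "B x = B y + a i * ((t * y i) ^ 2 - y i ^ 2)" unfolding x_def by (rule diag_upd[OF i])
  also have "a i * ((t * y i) ^ 2 - y i ^ 2) = (a i * y i ^ 2) * (t ^ 2 - 1)"
    by (simp add: power_mult_distrib right_diff_distrib)
  also have "t ^ 2 - 1 = w" using t(2) by simp
  also have "(a i * y i ^ 2) * w = - B y" using wden by (simp add: mult.commute)
  finally have "B x = 0" by simp
  moreover have "x i \<noteq> 0" using t yi0 by (simp add: x_def)
  ultimately show False using aniso i by blast
qed

lemma G0_shift:
  assumes aniso: "\<forall>x::nat \<Rightarrow> 'a. (\<exists>i<n. x i \<noteq> 0) \<longrightarrow> diag_form n a x \<noteq> 0"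
    and l: "v 2 \<le> int l"
  shows "G 0 (l + 2) = sc ` G 0 l"
proof
  show "sc ` G 0 l \<subseteq> G 0 (l + 2)"
  proof
    fix y assume "y \<in> sc ` G 0 l"
    then obtain x where x: "x \<in> G 0 l" "y = sc x" by blast
    have "B x \<in> I (v 2 + int l)" using x by (simp add: G_def)
    then have "B x * uf ^ 2 \<in> I (v 2 + int (l + 2))" unfolding I_uf_mult by simp
    then show "y \<in> G 0 (l + 2)" using x sc_V by (simp add: G_def diag_sc mult.commute)
  qed
  show "G 0 (l + 2) \<subseteq> sc ` G 0 l"
  proof
    fix y assume y: "y \<in> G 0 (l + 2)"
    have yV: "y \<in> V" using y by (simp add: G_def)
    have By: "B y \<in> I (v 2 + int (l + 2))" using y by (simp add: G_def)
    then have "B y \<in> I (2 * v 2 + 2)" by (rule I_mono) (use l in simp)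
    then have y1: "y i \<in> I 1" if "i < n" for i using unit_coord_bound[OF aniso yV _ that] by simp
    define x where "x = (\<lambda>i\<in>{..<n}. y i / uf)"
    have yx: "y i = x i * uf ^ 1" if "i < n" for i using that ufnz by (simp add: x_def)
    have xO: "x i \<in> I 0" if "i < n" for i using y1[OF that] unfolding yx[OF that] I_uf_mult by simp
    have xV: "x \<in> V" using xO by (auto simp: V_iff x_def)
    have ysc: "y = sc x"
    proof
      fix i show "y i = sc x i" using yV yx by (cases "i < n") (auto simp: sc_def V_iff)
    qed
    have "B x * uf ^ 2 \<in> I (v 2 + int (l + 2))" using By unfolding ysc diag_sc by (simp add: mult.commute)
    then have "B x \<in> I (v 2 + int l)" unfolding I_uf_mult by simp
    then have "x \<in> G 0 l" using xV by (simp add: G_def)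
    then show "y \<in> sc ` G 0 l" using ysc by blast
  qed
qed

lemma part2:
  assumes aniso: "\<forall>x::nat \<Rightarrow> 'a. (\<exists>i<n. x i \<noteq> 0) \<longrightarrow> diag_form n a x \<noteq> 0"
    and l: "v 2 \<le> int l"
  shows "measure M (G 0 (l + 2)) = measure M (G 0 l) / real (card (residue_field v)) ^ n"
  unfolding G0_shift[OF aniso l]
  by (rule measure_sc[OF G_sat[of l "nat (v 2 + int l)"]]) (use v2 in simp)

end


context qf
begin

declare ufnz[simp]

lemma I_prod5: "x1 \<in> I m1 \<Longrightarrow> x2 \<in> I m2 \<Longrightarrow> x3 \<in> I m3 \<Longrightarrow> x4 \<in> I m4 \<Longrightarrow> x5 \<in> I m5 \<Longrightarrow> m \<le> m1 + m2 + m3 + m4 + m5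
   \<Longrightarrow> x1 * x2 * x3 * x4 * x5 \<in> I m"
  by (rule I_mono[OF I_mult[OF I_mult[OF I_mult[OF I_mult]]]])

lemma shift_ex:
  fixes T l :: nat
  assumes x0: "x0 \<in> G (uf ^ (2 * T)) l" and l: "2 * int T + v 2 + 1 \<le> int l"
  obtains i k u where "i < n" "u \<noteq> 0" "v u = 0" "T + 1 \<le> k"
    "\<And>x c. x \<in> ball x0 (T + 1) \<Longrightarrow> c \<in> I 0 \<Longrightarrow>
       B (x(i := x i + uf ^ k * c)) - B x - 2 * uf ^ l * u * c \<in> I (v 2 + int l + 1)"
proof -
  have x0V: "x0 \<in> V" and Bx0: "B x0 - uf ^ (2 * T) \<in> I (v 2 + int l)" using x0 by (auto simp: G_def)
  have "\<exists>i<n. a i * x0 i ^ 2 \<notin> I (2 * int T + 1)"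
  proof (rule ccontr)
    assume "\<not> ?thesis"
    then have "B x0 \<in> I (2 * int T + 1)" unfolding diag_form_def by (intro I_sum) auto
    moreover have "B x0 - uf ^ (2 * T) \<in> I (2 * int T + 1)" using Bx0 by (rule I_mono) (use l v2 in simp)
    ultimately have "B x0 - (B x0 - uf ^ (2 * T)) \<in> I (2 * int T + 1)" by (rule I_diff)
    then show False using ufnz by (simp add: I_iff)
  qed
  then obtain i where i: "i < n" and nI: "a i * x0 i ^ 2 \<notin> I (2 * int T + 1)" by blast
  have ai: "a i \<noteq> 0" "0 \<le> v (a i)" "v (a i) \<le> 1" using coef i by auto
  have xi0: "x0 i \<noteq> 0" using nI by auto
  have vx0: "0 \<le> v (x0 i)" using x0V i xi0 by (auto simp: V_iff I_iff)
  have va2: "v (a i * x0 i ^ 2) = v (a i) + 2 * v (x0 i)"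
    using v_mult[OF ai(1), of "x0 i ^ 2"] v_power[OF xi0, of 2] xi0 by simp
  have bound: "v (a i) + 2 * v (x0 i) \<le> 2 * int T" using nI va2 by (auto simp: I_iff)
  define s where "s = v (a i) + v (x0 i)"
  have s0: "0 \<le> s" and sT: "s \<le> int T + 1" using ai vx0 bound by (auto simp: s_def)
  define k where "k = nat (int l - s)"
  have lk: "l = k + nat s" using s0 sT l v2 by (simp add: k_def)
  have kT: "T + 1 \<le> k" using s0 sT l v2 by (simp add: k_def)
  define u where "u = a i * x0 i / uf ^ nat s"
  have u0: "u \<noteq> 0" using ai xi0 ufnz by (simp add: u_def)
  have vax: "v (a i * x0 i) = s" using v_mult[OF ai(1) xi0] by (simp add: s_def)
  have vu: "v u = 0" unfolding u_def using v_divide[of "a i * x0 i" "uf ^ nat s"] ai xi0 vax s0 by simp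
  have ufu: "uf ^ l * u = uf ^ k * (a i * x0 i)" unfolding lk u_def by (simp add: power_add ufnz)
  show ?thesis
  proof (rule that[OF i u0 vu kT])
    fix x c assume x: "x \<in> ball x0 (T + 1)" and c: "c \<in> I 0"
    have xV: "x \<in> V" using x by (simp add: ball_iff)
    have dx: "x i - x0 i \<in> I (int T + 1)" using x i by (simp add: ball_iff add.commute)
    have eq: "B (x(i := x i + uf ^ k * c)) - B x - 2 * uf ^ l * u * c
        = 2 * uf ^ k * c * a i * (x i - x0 i) + a i * uf ^ k * uf ^ k * c * c"
    proof -
      have h1: "B (x(i := x i + uf ^ k * c)) - B x = a i * ((x i + uf ^ k * c) ^ 2 - x i ^ 2)"
        using diag_upd[OF i] by simp
      have h2: "2 * uf ^ l * u * c = 2 * c * (uf ^ k * (a i * x0 i))"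
        using ufu by (simp add: mult_ac)
      have "B (x(i := x i + uf ^ k * c)) - B x - 2 * uf ^ l * u * c
          = a i * ((x i + uf ^ k * c) ^ 2 - x i ^ 2) - 2 * c * (uf ^ k * (a i * x0 i))"
        unfolding h1 h2 ..
      also have "\<dots> = 2 * uf ^ k * c * a i * (x i - x0 i) + a i * uf ^ k * uf ^ k * c * c"
        by (simp add: algebra_simps power2_eq_square)
      finally show ?thesis .
    qed
    have t1: "2 * uf ^ k * c * a i * (x i - x0 i) \<in> I (v 2 + int l + 1)"
    proof (rule I_prod5[OF I_v uf_pow_I c I_v dx])
      show "v 2 + int l + 1 \<le> v 2 + int k + 0 + v (a i) + (int T + 1)"
        using lk s0 by (simp add: s_def) (use bound vx0 ai in linarith)
    qed
    have t2: "a i * uf ^ k * uf ^ k * c * c \<in> I (v 2 + int l + 1)"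
    proof (rule I_prod5[OF I_v uf_pow_I uf_pow_I c c])
      show "v 2 + int l + 1 \<le> v (a i) + int k + int k + 0 + 0"
        using lk s0 l bound ai vx0 by (simp add: s_def)
    qed
    show "B (x(i := x i + uf ^ k * c)) - B x - 2 * uf ^ l * u * c \<in> I (v 2 + int l + 1)"
      unfolding eq by (rule I_add[OF t1 t2])
  qed
qed

end


context qf
begin

declare ufnz[simp]

definition Gr where "Gr T l r = G (uf ^ (2 * T) + 2 * uf ^ l * r) (l + 1)"

lemma two_uf_I: "r \<in> I m \<Longrightarrow> 2 * uf ^ l * r \<in> I (v 2 + int l + m)"
  by (intro I_mult I_v uf_pow_I)

lemma Gr_sub: "r \<in> I 0 \<Longrightarrow> Gr T l r \<subseteq> G (uf ^ (2 * T)) l"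
proof
  fix x assume r: "r \<in> I 0" and x: "x \<in> Gr T l r"
  have 1: "B x - (uf ^ (2 * T) + 2 * uf ^ l * r) \<in> I (v 2 + int l)"
    using x unfolding Gr_def G_def by (auto intro: I_mono)
  have 2: "2 * uf ^ l * r \<in> I (v 2 + int l)" using two_uf_I[OF r, of l] by simp
  have "B x - uf ^ (2 * T) = (B x - (uf ^ (2 * T) + 2 * uf ^ l * r)) + 2 * uf ^ l * r" by simp
  then have "B x - uf ^ (2 * T) \<in> I (v 2 + int l)" using I_add[OF 1 2] by simp
  then show "x \<in> G (uf ^ (2 * T)) l" using x by (simp add: Gr_def G_def)
qed

lemma two_uf_nz: "2 * uf ^ l \<noteq> 0" using two by simp
lemma v_two_uf: "v (2 * uf ^ l) = v 2 + int l" using v_mult[OF two uf_pow_nz] by simp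

lemma Gr_cover: assumes x: "x \<in> G (uf ^ (2 * T)) l" shows "\<exists>r\<in>R1. x \<in> Gr T l r"
proof -
  define t where "t = (B x - uf ^ (2 * T)) / (2 * uf ^ l)"
  have xt: "B x - uf ^ (2 * T) = t * (2 * uf ^ l)" using two_uf_nz by (simp add: t_def)
  have "t * (2 * uf ^ l) \<in> I (v 2 + int l)" using x xt by (simp add: G_def)
  then have "t \<in> I 0" unfolding I_mult_cancel[OF two_uf_nz] v_two_uf by simp
  then obtain r where r: "r \<in> R1" "t - r \<in> I 1" using R1_props(3) by blast
  have "B x - (uf ^ (2 * T) + 2 * uf ^ l * r) = (t - r) * (2 * uf ^ l)" using xt by (simp add: algebra_simps)
  also have "\<dots> \<in> I (v 2 + int (l + 1))" unfolding I_mult_cancel[OF two_uf_nz] v_two_uf using r by simp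
  finally show ?thesis using r x by (auto simp: Gr_def G_def)
qed

lemma Gr_disj: assumes r: "r \<in> R1" "r' \<in> R1" "r \<noteq> r'" shows "Gr T l r \<inter> Gr T l r' = {}"
proof (rule ccontr)
  assume "Gr T l r \<inter> Gr T l r' \<noteq> {}"
  then obtain x where 1: "B x - (uf ^ (2 * T) + 2 * uf ^ l * r) \<in> I (v 2 + int (l + 1))"
    and 2: "B x - (uf ^ (2 * T) + 2 * uf ^ l * r') \<in> I (v 2 + int (l + 1))" by (auto simp: Gr_def G_def)
  have "(B x - (uf ^ (2 * T) + 2 * uf ^ l * r)) - (B x - (uf ^ (2 * T) + 2 * uf ^ l * r')) = (r' - r) * (2 * uf ^ l)"
    by (simp add: algebra_simps)
  then have "(r' - r) * (2 * uf ^ l) \<in> I (v 2 + int (l + 1))" using I_diff[OF 1 2] by simp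
  then have "r' - r \<in> I 1" unfolding I_mult_cancel[OF two_uf_nz] v_two_uf by simp
  then show False using R1_props(4)[of r' r] r by auto
qed

lemma Gr_zero: assumes r0: "r0 \<in> I 1" shows "Gr T l r0 = G (uf ^ (2 * T)) (l + 1)"
proof -
  have z: "2 * uf ^ l * r0 \<in> I (v 2 + int (l + 1))" using two_uf_I[OF r0, of l] by (simp add: algebra_simps)
  have "B x - (uf ^ (2 * T) + 2 * uf ^ l * r0) \<in> I (v 2 + int (l + 1)) \<longleftrightarrow>
        B x - uf ^ (2 * T) \<in> I (v 2 + int (l + 1))" for x
  proof
    assume h: "B x - (uf ^ (2 * T) + 2 * uf ^ l * r0) \<in> I (v 2 + int (l + 1))"
    from I_add[OF h z] show "B x - uf ^ (2 * T) \<in> I (v 2 + int (l + 1))" by simp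
  next
    assume h: "B x - uf ^ (2 * T) \<in> I (v 2 + int (l + 1))"
    from I_diff[OF h z] show "B x - (uf ^ (2 * T) + 2 * uf ^ l * r0) \<in> I (v 2 + int (l + 1))"
      by (simp add: algebra_simps)
  qed
  then show ?thesis unfolding Gr_def G_def by blast
qed

definition bv where "bv i k c = (\<lambda>j\<in>{..<n}. if j = i then uf ^ k * c else 0)"

lemma bv_V: "c \<in> I 0 \<Longrightarrow> bv i k c \<in> V"
proof -
  assume c: "c \<in> I 0"
  have "uf ^ k * c \<in> I (int k + 0)" using c by (intro I_mult uf_pow_I)
  then have "uf ^ k * c \<in> I 0" by (rule I_mono) simp
  then show ?thesis by (auto simp: bv_def V_iff)
qed

lemma tr_bv: "x \<in> V \<Longrightarrow> i < n \<Longrightarrow> tr (bv i k c) x = x(i := x i + uf ^ k * c)"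
  by (auto simp: tr_def bv_def V_iff fun_eq_iff)

lemma disj_sub: "A \<subseteq> C \<Longrightarrow> C \<inter> D = {} \<Longrightarrow> A \<inter> D = {}" by blast

lemma Gr_piece:
  fixes T l :: nat
  assumes l: "2 * int T + v 2 + 1 \<le> int l" and p: "p \<in> V" and r: "r \<in> I 0" "r' \<in> I 0"
  shows "measure M (Gr T l r \<inter> ball p (T + 1)) = measure M (Gr T l r' \<inter> ball p (T + 1))"
proof (cases "G (uf ^ (2 * T)) l \<inter> ball p (T + 1) = {}")
  case True
  have "Gr T l r \<inter> ball p (T + 1) = {}" "Gr T l r' \<inter> ball p (T + 1) = {}"
    using disj_sub[OF Gr_sub[OF r(1), of T l] True] disj_sub[OF Gr_sub[OF r(2), of T l] True] by simp_all
  then show ?thesis by simp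
next
  case False
  then obtain x0 where x0: "x0 \<in> G (uf ^ (2 * T)) l" "x0 \<in> ball p (T + 1)" by blast
  obtain i u k where i: "i < n" and u: "u \<noteq> 0" "v u = 0" and kT: "T + 1 \<le> k"
    and sh: "\<And>x c. x \<in> ball x0 (T + 1) \<Longrightarrow> c \<in> I 0 \<Longrightarrow>
       B (x(i := x i + uf ^ k * c)) - B x - 2 * uf ^ l * u * c \<in> I (v 2 + int l + 1)"
    by (rule shift_ex[OF x0(1) l], rule that, assumption+)
  have bx: "ball x0 (T + 1) = ball p (T + 1)" using ball_eq[OF x0(2)] .
  have step: "tr (bv i k d) x \<in> Gr T l (s + u * d) \<inter> ball p (T + 1)"
    if x: "x \<in> Gr T l s \<inter> ball p (T + 1)" and d: "d \<in> I 0" for x s d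
  proof -
    have xb: "x \<in> ball x0 (T + 1)" using x bx by simp
    have xV: "x \<in> V" using x by (simp add: ball_iff)
    have tV: "tr (bv i k d) x \<in> V" by (rule tr_V[OF bv_V[OF d] xV])
    have e: "tr (bv i k d) x = x(i := x i + uf ^ k * d)" by (rule tr_bv[OF xV i])
    have ukd: "uf ^ k * d \<in> I (int T + 1)"
    proof -
      have "uf ^ k * d \<in> I (int k + 0)" using d by (intro I_mult uf_pow_I)
      then show ?thesis by (rule I_mono) (use kT in simp)
    qed
    have inb: "tr (bv i k d) x \<in> ball p (T + 1)"
    proof -
      have "x j - p j \<in> I (int (T + 1))" if "j < n" for j using x that by (simp add: ball_iff)
      then have "(x(i := x i + uf ^ k * d)) j - p j \<in> I (int (T + 1))" if "j < n" for j
        using that I_add[OF _ ukd, of "x i - p i"] by (cases "j = i") (auto simp: algebra_simps)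
      then show ?thesis using tV e by (simp add: ball_iff)
    qed
    have h1: "B x - (uf ^ (2 * T) + 2 * uf ^ l * s) \<in> I (v 2 + int l + 1)"
      using x by (simp add: Gr_def G_def algebra_simps)
    have h2: "B (x(i := x i + uf ^ k * d)) - B x - 2 * uf ^ l * u * d \<in> I (v 2 + int l + 1)"
      by (rule sh[OF xb d])
    have eq: "B (x(i := x i + uf ^ k * d)) - (uf ^ (2 * T) + 2 * uf ^ l * (s + u * d))
        = (B x - (uf ^ (2 * T) + 2 * uf ^ l * s)) + (B (x(i := x i + uf ^ k * d)) - B x - 2 * uf ^ l * u * d)"
      by (simp add: algebra_simps)
    have "B (x(i := x i + uf ^ k * d)) - (uf ^ (2 * T) + 2 * uf ^ l * (s + u * d)) \<in> I (v 2 + int l + 1)"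
      unfolding eq by (rule I_add[OF h1 h2])
    then have "tr (bv i k d) x \<in> Gr T l (s + u * d)" using tV e by (simp add: Gr_def G_def algebra_simps)
    then show ?thesis using inb by blast
  qed
  define c where "c = (r' - r) / u"
  have uc: "u * c = r' - r" using u by (simp add: c_def)
  have cI: "c \<in> I 0"
  proof -
    have "c * u \<in> I 0" using uc r I_diff by (simp add: mult.commute)
    then show ?thesis unfolding I_mult_cancel[OF u(1)] u(2) by simp
  qed
  have mcI: "- c \<in> I 0" using cI by simp
  have img: "tr (bv i k c) ` (Gr T l r \<inter> ball p (T + 1)) = Gr T l r' \<inter> ball p (T + 1)"
  proof
    show "tr (bv i k c) ` (Gr T l r \<inter> ball p (T + 1)) \<subseteq> Gr T l r' \<inter> ball p (T + 1)"
      using step[OF _ cI, of _ r] uc by auto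
    show "Gr T l r' \<inter> ball p (T + 1) \<subseteq> tr (bv i k c) ` (Gr T l r \<inter> ball p (T + 1))"
    proof
      fix y assume y: "y \<in> Gr T l r' \<inter> ball p (T + 1)"
      have yV: "y \<in> V" using y by (simp add: ball_iff)
      let ?x = "tr (bv i k (- c)) y"
      have "?x \<in> Gr T l (r' + u * (- c)) \<inter> ball p (T + 1)" by (rule step[OF y mcI])
      moreover have "r' + u * (- c) = r" using uc by simp
      ultimately have xin: "?x \<in> Gr T l r \<inter> ball p (T + 1)" by simp
      have xV: "?x \<in> V" using xin by (simp add: ball_iff)
      have e1: "?x = y(i := y i + uf ^ k * (- c))" by (rule tr_bv[OF yV i])
      have e2: "tr (bv i k c) ?x = ?x(i := ?x i + uf ^ k * c)" by (rule tr_bv[OF xV i])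
      have "tr (bv i k c) ?x = y" unfolding e2 by (subst e1)+ (auto simp: fun_eq_iff)
      then show "y \<in> tr (bv i k c) ` (Gr T l r \<inter> ball p (T + 1))" using xin by (metis image_eqI)
    qed
  qed
  have meas: "Gr T l r \<inter> ball p (T + 1) \<in> sets M"
    using G_sets ball_sets[OF p] by (auto simp: Gr_def)
  show ?thesis using tr_meas[OF meas bv_V[OF cI, of i k]] img by simp
qed

end


context qf
begin

lemma Gr_sets: "Gr T l r \<in> sets M" unfolding Gr_def by (rule G_sets)

lemma meas_split_balls: assumes A: "A \<in> sets M" "A \<subseteq> V"
  shows "measure M A = (\<Sum>\<beta>\<in>balls_of m V. measure M (A \<inter> \<beta>))"
proof -
  have U: "A = (\<Union>\<beta>\<in>balls_of m V. A \<inter> \<beta>)"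
  proof
    show "A \<subseteq> (\<Union>\<beta>\<in>balls_of m V. A \<inter> \<beta>)"
    proof
      fix x assume x: "x \<in> A"
      then have "x \<in> V" using A by blast
      then have "ball x m \<in> balls_of m V" "x \<in> ball x m" by (auto simp: balls_of_def ball_self)
      then show "x \<in> (\<Union>\<beta>\<in>balls_of m V. A \<inter> \<beta>)" using x by blast
    qed
  qed blast
  have "measure M (\<Union>\<beta>\<in>balls_of m V. A \<inter> \<beta>) = (\<Sum>\<beta>\<in>balls_of m V. measure M (A \<inter> \<beta>))"
  proof (rule measure_finite_Union)
    show "finite (balls_of m V)" by (rule balls_of_fin) simp
    show "(\<lambda>\<beta>. A \<inter> \<beta>) ` balls_of m V \<subseteq> sets M"
      using A(1) by (auto simp: balls_of_def intro!: sets.Int ball_sets)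
    show "disjoint_family_on (\<lambda>\<beta>. A \<inter> \<beta>) (balls_of m V)"
      unfolding disjoint_family_on_def balls_of_def using ball_disj by auto
  qed (rule finM)
  then show ?thesis using U by simp
qed

lemma Gr_meas:
  fixes T l :: nat
  assumes l: "2 * int T + v 2 + 1 \<le> int l" and r: "r \<in> I 0" "r' \<in> I 0"
  shows "measure M (Gr T l r) = measure M (Gr T l r')"
proof -
  have sub: "Gr T l s \<subseteq> V" for s by (auto simp: Gr_def G_def)
  have "measure M (Gr T l r) = (\<Sum>\<beta>\<in>balls_of (T + 1) V. measure M (Gr T l r \<inter> \<beta>))"
    by (rule meas_split_balls[OF Gr_sets sub])
  also have "\<dots> = (\<Sum>\<beta>\<in>balls_of (T + 1) V. measure M (Gr T l r' \<inter> \<beta>))"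
  proof (rule sum.cong[OF refl])
    fix \<beta> assume "\<beta> \<in> balls_of (T + 1) V"
    then obtain p where p: "p \<in> V" "\<beta> = ball p (T + 1)" by (auto simp: balls_of_def)
    show "measure M (Gr T l r \<inter> \<beta>) = measure M (Gr T l r' \<inter> \<beta>)"
      unfolding p(2) by (rule Gr_piece[OF l p(1) r])
  qed
  also have "\<dots> = measure M (Gr T l r')"
    by (rule meas_split_balls[OF Gr_sets sub, symmetric])
  finally show ?thesis .
qed

lemma part1:
  fixes T l :: nat
  assumes l: "2 * int T + v 2 + 1 \<le> int l"
  shows "measure M (G (uf ^ (2 * T)) l) = real (card (residue_field v)) * measure M (G (uf ^ (2 * T)) (l + 1))"
proof -
  have U: "G (uf ^ (2 * T)) l = (\<Union>r\<in>R1. Gr T l r)"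
  proof
    show "G (uf ^ (2 * T)) l \<subseteq> (\<Union>r\<in>R1. Gr T l r)"
    proof
      fix x assume "x \<in> G (uf ^ (2 * T)) l"
      from Gr_cover[OF this] show "x \<in> (\<Union>r\<in>R1. Gr T l r)" by (rule bexE) (rule UN_I)
    qed
    show "(\<Union>r\<in>R1. Gr T l r) \<subseteq> G (uf ^ (2 * T)) l"
    proof (rule UN_least)
      fix r assume "r \<in> R1"
      then have "r \<in> I 0" using R1_props(2) by (rule subsetD[rotated])
      then show "Gr T l r \<subseteq> G (uf ^ (2 * T)) l" by (rule Gr_sub)
    qed
  qed
  have "measure M (\<Union>r\<in>R1. Gr T l r) = (\<Sum>r\<in>R1. measure M (Gr T l r))"
  proof (rule measure_finite_Union)
    show "finite R1" by (rule R1_props(1))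
    show "Gr T l ` R1 \<subseteq> sets M" using Gr_sets by (simp add: image_subset_iff)
    show "disjoint_family_on (Gr T l) R1"
      unfolding disjoint_family_on_def by (intro ballI impI Gr_disj)
  qed (rule finM)
  obtain r0 where r0: "r0 \<in> R1" "0 - r0 \<in> I 1" using R1_props(3)[of 0] by auto
  have r0I: "r0 \<in> I 1" using r0(2) by simp
  have "(\<Sum>r\<in>R1. measure M (Gr T l r)) = (\<Sum>r\<in>R1. measure M (G (uf ^ (2 * T)) (l + 1)))"
  proof (rule sum.cong[OF refl])
    fix r assume r: "r \<in> R1"
    have "r0 \<in> I 0" using r0I by (rule I_mono) simp
    moreover have "r \<in> I 0" using R1_props(2) r by (rule subsetD)
    ultimately have "measure M (Gr T l r) = measure M (Gr T l r0)"
      by (intro Gr_meas[OF l])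
    then show "measure M (Gr T l r) = measure M (G (uf ^ (2 * T)) (l + 1))"
      using Gr_zero[OF r0I] by simp
  qed
  then show ?thesis using U \<open>measure M (\<Union>r\<in>R1. Gr T l r) = _\<close> R1_props(5) by (simp only:) simp
qed

end


lemma ser1:
  fixes X :: "nat \<Rightarrow> real" and z :: complex and q :: real
  assumes z: "norm z < 1" and q: "1 \<le> q" and rec: "\<And>l. L \<le> l \<Longrightarrow> X (l + 1) = X l / q"
  shows "(\<lambda>l. z ^ l * of_real (X l)) sums
           ((\<Sum>l<L. z ^ l * of_real (X l)) + z ^ L / (1 - z / of_real q) * of_real (X L))"
proof -
  let ?w = "z / of_real q"
  have XL: "X (j + L) = X L / q ^ j" for j
  proof (induction j)
    case 0 then show ?case by simp
  next
    case (Suc j)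
    have "X (Suc j + L) = X (j + L) / q" using rec[of "j + L"] by simp
    also have "\<dots> = X L / q ^ j / q" using Suc by simp
    finally show ?case by (simp add: divide_divide_eq_left mult.commute)
  qed
  have w: "norm ?w < 1"
  proof -
    have "norm ?w = norm z / q" using q by (simp add: norm_divide)
    also have "\<dots> \<le> norm z" using q by (simp add: divide_le_eq mult_le_cancel_left1)
    finally show ?thesis using z by simp
  qed
  have "(\<lambda>j. (z ^ L * of_real (X L)) * ?w ^ j) sums ((z ^ L * of_real (X L)) * (1 / (1 - ?w)))"
    by (rule sums_mult[OF geometric_sums[OF w]])
  moreover have "(z ^ L * of_real (X L)) * ?w ^ j = z ^ (j + L) * of_real (X (j + L))" for j
    using q unfolding XL by (simp add: power_add power_divide field_simps)
  ultimately have "(\<lambda>j. z ^ (j + L) * of_real (X (j + L))) sums (z ^ L / (1 - ?w) * of_real (X L))"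
    by simp
  then have "(\<lambda>l. z ^ l * of_real (X l)) sums (z ^ L / (1 - ?w) * of_real (X L) + (\<Sum>l<L. z ^ l * of_real (X l)))"
    using sums_iff_shift[where f = "\<lambda>l. z ^ l * of_real (X l)" and n = L] by simp
  then show ?thesis by (simp add: add.commute)
qed

lemma ser2:
  fixes X :: "nat \<Rightarrow> real" and z :: complex and Q :: real
  assumes z: "norm z < 1" and Q: "1 \<le> Q" and Xb: "\<And>l. \<bar>X l\<bar> \<le> 1"
    and rec: "\<And>l. e \<le> l \<Longrightarrow> X (l + 2) = X l / Q"
  shows "(\<lambda>l. z ^ l * of_real (X l)) sums
           ((\<Sum>l<e. z ^ l * of_real (X l)) + z ^ e / (1 - z ^ 2 / of_real Q) * of_real (X e)
            + z ^ (e + 1) / (1 - z ^ 2 / of_real Q) * of_real (X (e + 1)))"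
proof -
  let ?u = "z ^ 2 / of_real Q"
  define g where "g j = z ^ (j + e) * of_real (X (j + e))" for j
  have Xe: "X (2 * j + e + d) = X (e + d) / Q ^ j" for j d
  proof (induction j)
    case 0 then show ?case by simp
  next
    case (Suc j)
    have "X (2 * Suc j + e + d) = X (2 * j + e + d) / Q" using rec[of "2 * j + e + d"] by (simp add: algebra_simps)
    also have "\<dots> = X (e + d) / Q ^ j / Q" using Suc by simp
    finally show ?case by (simp add: divide_divide_eq_left mult.commute)
  qed
  have u: "norm ?u < 1"
  proof -
    have "norm ?u = norm z ^ 2 / Q" using Q by (simp add: norm_divide norm_power)
    also have "\<dots> \<le> norm z ^ 2" using Q by (simp add: divide_le_eq mult_le_cancel_left1)
    also have "\<dots> < 1" using z by (simp add: power_less_one_iff abs_less_iff)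
    finally show ?thesis .
  qed
  have summ: "summable g"
  proof (rule summable_comparison_test)
    show "\<exists>N. \<forall>j\<ge>N. norm (g j) \<le> norm z ^ e * norm z ^ j"
    proof (intro exI allI impI)
      fix j
      have "norm (g j) = norm z ^ (j + e) * \<bar>X (j + e)\<bar>" by (simp add: g_def norm_mult norm_power)
      also have "\<dots> \<le> norm z ^ (j + e) * 1" by (intro mult_left_mono Xb) simp
      finally show "norm (g j) \<le> norm z ^ e * norm z ^ j" by (simp add: power_add mult.commute)
    qed
    show "summable (\<lambda>j. norm z ^ e * norm z ^ j)"
      using z by (intro summable_mult summable_geometric) simp
  qed
  define c where "c = z ^ e * of_real (X e) + z ^ (e + 1) * of_real (X (e + 1))"
  have grp: "(\<Sum>i\<in>{j * 2..<j * 2 + 2}. g i) = c * ?u ^ j" for j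
  proof -
    have s: "{j * 2..<j * 2 + 2} = {2 * j, 2 * j + 1}" by auto
    have "(\<Sum>i\<in>{j * 2..<j * 2 + 2}. g i) = g (2 * j) + g (2 * j + 1)" unfolding s by simp
    also have "g (2 * j) = z ^ e * of_real (X e) * ?u ^ j"
    proof -
      have x: "X (2 * j + e) = X e / Q ^ j" using Xe[of j 0] by simp
      have p: "z ^ (2 * j + e) = z ^ e * (z ^ 2) ^ j" by (simp add: power_add power_mult)
      show ?thesis unfolding g_def x p by (simp add: power_divide mult_ac)
    qed
    also have "g (2 * j + 1) = z ^ (e + 1) * of_real (X (e + 1)) * ?u ^ j"
    proof -
      have x: "X (2 * j + 1 + e) = X (e + 1) / Q ^ j" using Xe[of j 1] by (simp add: add_ac)
      have p: "z ^ (2 * j + 1 + e) = z ^ (e + 1) * (z ^ 2) ^ j" by (simp add: power_add power_mult mult_ac flip: power_mult power_mult_distrib)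
      show ?thesis unfolding g_def x p by (simp add: power_divide mult_ac)
    qed
    finally show ?thesis by (simp add: c_def algebra_simps)
  qed
  have "(\<lambda>j. \<Sum>i\<in>{j * 2..<j * 2 + 2}. g i) sums suminf g"
    by (rule sums_group[OF summable_sums[OF summ]]) simp
  moreover have "(\<lambda>j. c * ?u ^ j) sums (c * (1 / (1 - ?u)))"
    by (rule sums_mult[OF geometric_sums[OF u]])
  ultimately have "suminf g = c * (1 / (1 - ?u))" unfolding grp using sums_unique2 by blast
  then have "g sums (c * (1 / (1 - ?u)))" using summ by (simp add: sums_iff)
  then have S1: "(\<lambda>l. z ^ l * of_real (X l)) sums (c * (1 / (1 - ?u)) + (\<Sum>l<e. z ^ l * of_real (X l)))"
    using sums_iff_shift[where f = "\<lambda>l. z ^ l * of_real (X l)" and n = e] unfolding g_def by simp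
  have E: "c * (1 / (1 - ?u)) + (\<Sum>l<e. z ^ l * of_real (X l)) = (\<Sum>l<e. z ^ l * of_real (X l)) + z ^ e / (1 - ?u) * of_real (X e)
            + z ^ (e + 1) / (1 - ?u) * of_real (X (e + 1))"
    unfolding c_def by (simp add: algebra_simps add_divide_distrib)
  show ?thesis using E S1 by (simp only:)
qed


theorem proposition2p4:
  fixes v :: "'a::field \<Rightarrow> int" and uf :: 'a and q n T :: nat
    and a :: "nat \<Rightarrow> 'a" and M :: "(nat \<Rightarrow> 'a) measure" and \<beta> :: complex
  assumes lf: "nonarch_local_field v"
    and two_nz: "(2::'a) \<noteq> 0"
    and res2: "(2::'a) \<in> val_ideal v 1"
    and unif: "uf \<noteq> 0" "v uf = 1"
    and q_def: "q = card (residue_field v)"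
    and coeffs: "\<forall>i<n. a i \<noteq> 0 \<and> 0 \<le> v (a i) \<and> v (a i) \<le> 1"
    and aniso: "\<forall>x::nat \<Rightarrow> 'a. (\<exists>i<n. x i \<noteq> 0) \<longrightarrow> diag_form n a x \<noteq> 0"
    and haar: "haar_prob v n M"
    and beta: "0 < Re \<beta>"
  defines "z \<equiv> (of_nat q :: complex) powr (- \<beta>)"
    and "w \<equiv> (of_nat q :: complex) powr (- \<beta>) / of_nat q"
    and "u \<equiv> ((of_nat q :: complex) powr (- \<beta>)) ^ 2 / of_nat q ^ n"
    and "e \<equiv> nat (v 2)"
  shows "(\<lambda>l. z ^ l * of_real (XB v uf n a M (uf ^ (2 * T)) l)) sums
           ((\<Sum>l<2 * T + e + 1. z ^ l * of_real (XB v uf n a M (uf ^ (2 * T)) l))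
            + z ^ (2 * T + e + 1) / (1 - w) * of_real (XB v uf n a M (uf ^ (2 * T)) (2 * T + e + 1)))
       \<and> (\<lambda>l. z ^ l * of_real (XB v uf n a M 0 l)) sums
           ((\<Sum>l<e. z ^ l * of_real (XB v uf n a M 0 l))
            + z ^ e / (1 - u) * of_real (XB v uf n a M 0 e)
            + z ^ (e + 1) / (1 - u) * of_real (XB v uf n a M 0 (e + 1)))"
proof -
  have dv: "discrete_valuation v" and comp: "val_complete v" and fin: "finite (residue_field v)"
    using lf by (auto simp: nonarch_local_field_def)
  have v2: "1 \<le> v 2" using res2 two_nz by (simp add: val_ideal_def)
  interpret Q: qf v uf n M a
    by unfold_locales (use dv comp fin unif haar coeffs two_nz v2 in auto)
  have ev: "int e = v 2" using v2 by (simp add: e_def)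
  have q2: "2 \<le> q"
  proof -
    obtain r0 where r0: "r0 \<in> Q.R1" "0 - r0 \<in> Q.I 1" using Q.R1_props(3)[of 0] by auto
    obtain r1 where r1: "r1 \<in> Q.R1" "1 - r1 \<in> Q.I 1" using Q.R1_props(3)[of 1] by (auto simp: val_ideal_def)
    have "r0 \<noteq> r1"
    proof
      assume "r0 = r1"
      then have "(1 - r1) - (0 - r0) \<in> Q.I 1" using r0 r1 Q.I_diff by blast
      then have "(1::'a) \<in> Q.I 1" using \<open>r0 = r1\<close> by simp
      then show False by (simp add: val_ideal_def)
    qed
    then have "card {r0, r1} = 2" by simp
    moreover have "card {r0, r1} \<le> card Q.R1" using r0 r1 Q.R1_props(1) by (intro card_mono) auto
    ultimately show ?thesis using Q.R1_props(5) q_def by simp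
  qed
  have zn: "norm z < 1"
  proof -
    have "norm z = real q powr (Re (- \<beta>))" unfolding z_def
      by (subst norm_powr_real_powr) auto
    also have "\<dots> < 1" using q2 beta by (intro powr_less_one) auto
    finally show ?thesis .
  qed
  have mle: "measure M A \<le> 1" for A
  proof -
    have "emeasure M A \<le> 1" using emeasure_space[of M A] Q.M1 Q.spaceM by simp
    then show ?thesis unfolding measure_def by (intro enn2real_leI) auto
  qed
  have Xb: "\<bar>XB v uf n a M \<sigma> l\<bar> \<le> 1" for \<sigma> l
    unfolding Q.XB_eq using mle[of "Q.G \<sigma> l"] by simp
  have part1: "(\<lambda>l. z ^ l * of_real (XB v uf n a M (uf ^ (2 * T)) l)) sums
           ((\<Sum>l<2 * T + e + 1. z ^ l * of_real (XB v uf n a M (uf ^ (2 * T)) l))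
            + z ^ (2 * T + e + 1) / (1 - w) * of_real (XB v uf n a M (uf ^ (2 * T)) (2 * T + e + 1)))"
  proof -
    have rec: "XB v uf n a M (uf ^ (2 * T)) (l + 1) = XB v uf n a M (uf ^ (2 * T)) l / real q"
      if "2 * T + e + 1 \<le> l" for l
    proof -
      have "2 * int T + v 2 + 1 \<le> int l" using that ev by linarith
      from Q.part1[OF this] show ?thesis unfolding Q.XB_eq using q2 q_def by simp
    qed
    have weq: "z / complex_of_real (real q) = w" unfolding w_def z_def by simp
    have q1: "1 \<le> real q" using q2 by simp
    from ser1[where X = "\<lambda>l. XB v uf n a M (uf ^ (2 * T)) l" and q = "real q" and L = "2 * T + e + 1", OF zn q1 rec]
    show ?thesis unfolding weq .
  qed
  have part2: "(\<lambda>l. z ^ l * of_real (XB v uf n a M 0 l)) sums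
           ((\<Sum>l<e. z ^ l * of_real (XB v uf n a M 0 l))
            + z ^ e / (1 - u) * of_real (XB v uf n a M 0 e)
            + z ^ (e + 1) / (1 - u) * of_real (XB v uf n a M 0 (e + 1)))"
  proof -
    have rec: "XB v uf n a M 0 (l + 2) = XB v uf n a M 0 l / real q ^ n" if "e \<le> l" for l
    proof -
      have "v 2 \<le> int l" using that ev by linarith
      from Q.part2[OF aniso this] show ?thesis unfolding Q.XB_eq using q_def by simp
    qed
    have Q1: "1 \<le> real q ^ n" using q2 by simp
    have ueq: "z ^ 2 / complex_of_real (real q ^ n) = u" unfolding u_def z_def by simp
    from ser2[where X = "\<lambda>l. XB v uf n a M 0 l" and Q = "real q ^ n" and e = e, OF zn Q1 Xb rec]
    show ?thesis unfolding ueq .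
  qed
  show ?thesis using part1 part2 by blast
qed


end
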